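(* Let $W\subseteq T^*Q$ be a subbundle, $\mathfrak H$ a quadratic form on $T^*Q$, $h,\hat h:Q\to\mathbb R$ smooth functions, $\hat W$ a complement of $W$ with projections $\hat{\mathfrak p}:T^*Q\to\hat W$, $\mathfrak p:T^*Q\to W$, and $\mathfrak K$, $\mathfrak L$ quadratic forms on $\hat W$ and $W$ respectively. Put $\hat{\mathfrak H}=\mathfrak K\circ\hat{\mathfrak p}+\mathfrak L\circ\mathfrak p$. Then $\mathbb F(\mathfrak L\circ\mathfrak p)(\sigma)=0$ for all $\sigma\in\hat W$, and the potential equation $$\big(\mathrm d\hat h\circ\mathbb F\mathfrak H-\mathrm dh\circ\mathbb F\hat{\mathfrak H}\big)\circ(\mathbb F\hat{\mathfrak H})^{-1}(\mathsf v)=0\quad\forall\,\mathsf v\in W^\circ$$ holds if and only if $$\big(\mathrm d\hat h\circ\mathbb F\mathfrak H-\mathrm dh\circ\mathbb F(\mathfrak K\circ\hat{\mathfrak p})\big)(\sigma)=0\quad\forall\,\sigma\in\hat W.$$ In particular the potential equation does not depend on $\mathfrak L$.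
   Context: $Q$ is a smooth connected manifold of dimension $n$, $\pi:T^*Q\to Q$ its cotangent bundle, $\langle\cdot,\cdot\rangle$ the pairing between $T_q^*Q$ and $T_qQ$. For a smooth vector subbundle $V\subseteq T^*Q$, a quadratic form on $V$ is a function $\mathfrak F(\alpha)=\tfrac12\langle\alpha,\rho^\sharp(\alpha)\rangle$ with $\rho$ a smooth fibered positive-definite inner product on $V^*$, $\rho^\flat:V^*\to V$ given by $\langle\rho^\flat(u),v\rangle=\rho(u,v)$, $\rho^\sharp=(\rho^\flat)^{-1}$. A complement of $W$ is a smooth subbundle $\hat W$ with $T^*Q=\hat W\oplus W$. $W^\circ\subseteq TQ$ is the annihilator of $W$. The fiber derivative of a smooth $f:T^*Q\to\mathbb R$ is $\mathbb Ff:T^*Q\to TQ$ with $\langle\beta,\mathbb Ff(\alpha)\rangle=\frac{d}{dt}f(\alpha+t\beta)|_{t=0}$ ($\alpha,\beta\in T_q^*Q$); for a quadratic form $\mathfrak F$ on $T^*Q$, $\mathbb F\mathfrak F=\rho^\sharp$ is a bundle isomorphism. For a smooth function $g$ on $Q$ and a fiber-preserving map $F:T^*Q\to TQ$, $\mathrm dg\circ F$ denotes $\alpha\mapsto\langle \mathrm dg(\pi(\alpha)),F(\alpha)\rangle$. *)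

theory Defs
  imports "HOL-Analysis.Analysis"
begin

text \<open>Points of Q form an arbitrary type 'q. Each cotangent fiber
T_q^*Q and each tangent fiber T_qQ is identified with real^'n (n = dim Q = CARD('n)),
and the pairing between them is the inner product. A (sub)bundle is a map
q \<mapsto> subspace of the fiber; functions on T^*Q are functions 'q => real^'n => real.\<close>

definition pairing :: "real^'n \<Rightarrow> real^'n \<Rightarrow> real" where
  "pairing \<alpha> v = \<alpha> \<bullet> v"

definition subbundle :: "('q \<Rightarrow> (real^'n) set) \<Rightarrow> bool" where
  "subbundle V \<longleftrightarrow> (\<forall>q. subspace (V q)) \<and> (\<forall>q q'. dim (V q) = dim (V q'))"

definition is_complement :: "('q \<Rightarrow> (real^'n) set) \<Rightarrow> ('q \<Rightarrow> (real^'n) set) \<Rightarrow> bool" where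
  "is_complement Wh W \<longleftrightarrow> subbundle Wh \<and>
     (\<forall>q. Wh q \<inter> W q = {0} \<and> (\<forall>\<alpha>. \<exists>\<sigma>\<in>Wh q. \<exists>\<omega>\<in>W q. \<alpha> = \<sigma> + \<omega>))"

definition proj_along :: "('q \<Rightarrow> (real^'n) set) \<Rightarrow> ('q \<Rightarrow> (real^'n) set) \<Rightarrow> 'q \<Rightarrow> real^'n \<Rightarrow> real^'n" where
  "proj_along A B q \<alpha> = (THE \<sigma>. \<sigma> \<in> A q \<and> \<alpha> - \<sigma> \<in> B q)"

definition annihilator :: "(real^'n) set \<Rightarrow> (real^'n) set" where
  "annihilator V = {v. \<forall>\<alpha>\<in>V. pairing \<alpha> v = 0}"

text \<open>Quadratic form on the subbundle V: F(\<alpha>) = 1/2 <\<alpha>, \<rho>#(\<alpha>)>, where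
(\<alpha>,\<beta>) \<mapsto> <\<alpha>, \<rho>#(\<beta>)> is a fiberwise symmetric positive definite bilinear form on V
(this is exactly what a positive definite inner product \<rho> on V^* induces).\<close>
definition quadratic_form_on :: "('q \<Rightarrow> (real^'n) set) \<Rightarrow> ('q \<Rightarrow> real^'n \<Rightarrow> real) \<Rightarrow> bool" where
  "quadratic_form_on V F \<longleftrightarrow> (\<exists>B :: 'q \<Rightarrow> real^'n \<Rightarrow> real^'n \<Rightarrow> real.
     \<forall>q. bilinear (B q) \<and>
         (\<forall>\<alpha>\<in>V q. \<forall>\<beta>\<in>V q. B q \<alpha> \<beta> = B q \<beta> \<alpha>) \<and>
         (\<forall>\<alpha>\<in>V q. \<alpha> \<noteq> 0 \<longrightarrow> B q \<alpha> \<alpha> > 0) \<and>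
         (\<forall>\<alpha>\<in>V q. F q \<alpha> = B q \<alpha> \<alpha> / 2))"

definition fiber_deriv :: "('q \<Rightarrow> real^'n \<Rightarrow> real) \<Rightarrow> 'q \<Rightarrow> real^'n \<Rightarrow> real^'n" where
  "fiber_deriv f q \<alpha> = (THE u. \<forall>\<beta>. ((\<lambda>t. f q (\<alpha> + t *\<^sub>R \<beta>)) has_real_derivative pairing \<beta> u) (at 0))"

end

theory Submission
  imports Defs
begin

lemma vec_eq_inner:
  fixes u v :: "'a::real_inner"
  assumes "\<forall>\<beta>. \<beta> \<bullet> u = \<beta> \<bullet> v" shows "u = v"
proof -
  have "u \<bullet> u = u \<bullet> v" "v \<bullet> u = v \<bullet> v" using assms by auto
  hence "(u - v) \<bullet> (u - v) = 0" by (simp add: inner_diff_left inner_diff_right inner_commute)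
  thus ?thesis by simp
qed

definition rep :: "('a::euclidean_space \<Rightarrow> real) \<Rightarrow> 'a" where
  "rep f = (\<Sum>b\<in>Basis. f b *\<^sub>R b)"

lemma rep_inner:
  fixes f :: "'a::euclidean_space \<Rightarrow> real"
  assumes "linear f" shows "\<beta> \<bullet> rep f = f \<beta>"
proof -
  have "f \<beta> = f (\<Sum>b\<in>Basis. (\<beta> \<bullet> b) *\<^sub>R b)" by (simp add: euclidean_representation)
  also have "\<dots> = (\<Sum>b\<in>Basis. (\<beta> \<bullet> b) * f b)"
    using assms by (simp add: linear_sum linear_scale)
  also have "\<dots> = \<beta> \<bullet> rep f" unfolding rep_def by (simp add: inner_sum_right mult.commute)
  finally show ?thesis by simp
qed

lemma fd_unique:
  assumes "\<forall>\<beta>. ((\<lambda>t. f q (\<alpha> + t *\<^sub>R \<beta>)) has_real_derivative (\<beta> \<bullet> u)) (at 0)"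
  shows "fiber_deriv f q \<alpha> = u"
  unfolding fiber_deriv_def pairing_def
proof (rule the_equality)
  show "\<forall>\<beta>. ((\<lambda>t. f q (\<alpha> + t *\<^sub>R \<beta>)) has_real_derivative (\<beta> \<bullet> u)) (at 0)" by fact
  fix u' assume u': "\<forall>\<beta>. ((\<lambda>t. f q (\<alpha> + t *\<^sub>R \<beta>)) has_real_derivative (\<beta> \<bullet> u')) (at 0)"
  have "\<forall>\<beta>. \<beta> \<bullet> u' = \<beta> \<bullet> u"
    using u' assms DERIV_unique by blast
  thus "u' = u" by (rule vec_eq_inner)
qed

lemma fd_quad:
  fixes C :: "real^'n \<Rightarrow> real^'n \<Rightarrow> real"
  assumes C: "bilinear C" and sym: "\<forall>x y. C x y = C y x" and f: "\<forall>x. f q x = C x x / 2"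
  shows "fiber_deriv f q \<alpha> = rep (C \<alpha>)"
proof (rule fd_unique, rule allI)
  fix \<beta>
  have lin: "linear (C \<alpha>)" using C by (simp add: bilinear_def)
  have eq: "(\<lambda>t. f q (\<alpha> + t *\<^sub>R \<beta>)) = (\<lambda>t. C \<alpha> \<alpha> / 2 + t * C \<alpha> \<beta> + t^2 * (C \<beta> \<beta> / 2))"
  proof
    fix t
    have "C (\<alpha> + t *\<^sub>R \<beta>) (\<alpha> + t *\<^sub>R \<beta>) = C \<alpha> \<alpha> + t * C \<alpha> \<beta> + t * C \<beta> \<alpha> + t * t * C \<beta> \<beta>"
      using C by (simp add: bilinear_ladd bilinear_radd bilinear_lmul bilinear_rmul algebra_simps)
    thus "f q (\<alpha> + t *\<^sub>R \<beta>) = C \<alpha> \<alpha> / 2 + t * C \<alpha> \<beta> + t^2 * (C \<beta> \<beta> / 2)"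
      using f sym by (simp add: power2_eq_square field_simps)
  qed
  have "((\<lambda>t. C \<alpha> \<alpha> / 2 + t * C \<alpha> \<beta> + t^2 * (C \<beta> \<beta> / 2)) has_real_derivative C \<alpha> \<beta>) (at 0)"
    by (auto intro!: derivative_eq_intros)
  thus "((\<lambda>t. f q (\<alpha> + t *\<^sub>R \<beta>)) has_real_derivative \<beta> \<bullet> rep (C \<alpha>)) (at 0)"
    using eq rep_inner[OF lin] by simp
qed

lemma proj_char:
  assumes "subspace (A q)" "subspace (B q)" "A q \<inter> B q = {0}" "\<sigma> \<in> A q" "\<alpha> - \<sigma> \<in> B q"
  shows "proj_along A B q \<alpha> = \<sigma>"
  unfolding proj_along_def
proof (rule the_equality)
  show "\<sigma> \<in> A q \<and> \<alpha> - \<sigma> \<in> B q" using assms by simp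
  fix \<tau> assume t: "\<tau> \<in> A q \<and> \<alpha> - \<tau> \<in> B q"
  have "\<tau> - \<sigma> \<in> A q" using assms t subspace_diff by blast
  moreover have "(\<alpha> - \<sigma>) - (\<alpha> - \<tau>) \<in> B q" using assms t subspace_diff by blast
  hence "\<tau> - \<sigma> \<in> B q" by simp
  ultimately have "\<tau> - \<sigma> \<in> {0}" using assms(3) by blast
  thus "\<tau> = \<sigma>" by simp
qed

lemma proj_mem:
  assumes "subspace (A q)" "subspace (B q)" "A q \<inter> B q = {0}"
    "\<exists>\<sigma>\<in>A q. \<exists>\<omega>\<in>B q. \<alpha> = \<sigma> + \<omega>"
  shows "proj_along A B q \<alpha> \<in> A q \<and> \<alpha> - proj_along A B q \<alpha> \<in> B q"
proof -
  obtain \<sigma> \<omega> where s: "\<sigma> \<in> A q" "\<omega> \<in> B q" "\<alpha> = \<sigma> + \<omega>" using assms(4) by blast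
  have "proj_along A B q \<alpha> = \<sigma>" by (rule proj_char) (use assms s in auto)
  thus ?thesis using s by simp
qed

lemma proj_linear:
  assumes "subspace (A q)" "subspace (B q)" "A q \<inter> B q = {0}"
    "\<forall>\<alpha>. \<exists>\<sigma>\<in>A q. \<exists>\<omega>\<in>B q. \<alpha> = \<sigma> + \<omega>"
  shows "linear (proj_along A B q)"
proof (rule linearI)
  have m: "\<And>z. proj_along A B q z \<in> A q \<and> z - proj_along A B q z \<in> B q"
    using proj_mem[where A=A and B=B and q=q, OF assms(1-3)] assms(4) by blast
  fix x y
  show "proj_along A B q (x + y) = proj_along A B q x + proj_along A B q y"
  proof (rule proj_char[where A=A and B=B and q=q, OF assms(1-3)])
    show "proj_along A B q x + proj_along A B q y \<in> A q" using m assms(1) subspace_add by blast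
    have "(x - proj_along A B q x) + (y - proj_along A B q y) \<in> B q" using m assms(2) subspace_add by blast
    thus "x + y - (proj_along A B q x + proj_along A B q y) \<in> B q" by (simp add: algebra_simps)
  qed
next
  have m: "\<And>z. proj_along A B q z \<in> A q \<and> z - proj_along A B q z \<in> B q"
    using proj_mem[where A=A and B=B and q=q, OF assms(1-3)] assms(4) by blast
  fix r x
  show "proj_along A B q (r *\<^sub>R x) = r *\<^sub>R proj_along A B q x"
  proof (rule proj_char[where A=A and B=B and q=q, OF assms(1-3)])
    show "r *\<^sub>R proj_along A B q x \<in> A q" using m assms(1) subspace_mul by blast
    have "r *\<^sub>R (x - proj_along A B q x) \<in> B q" using m assms(2) subspace_mul by blast
    thus "r *\<^sub>R x - r *\<^sub>R proj_along A B q x \<in> B q" by (simp add: algebra_simps)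
  qed
qed

lemma bilinear_compose:
  assumes "bilinear h" "linear f" "linear g"
  shows "bilinear (\<lambda>x y. h (f x) (g y))"
proof -
  have "linear (\<lambda>y. h (f x) (g y))" for x
    using linear_compose[OF assms(3), of "h (f x)"] assms(1) by (simp add: bilinear_def o_def)
  moreover have "linear (\<lambda>x. h (f x) (g y))" for y
    using linear_compose[OF assms(2), of "\<lambda>z. h z (g y)"] assms(1) by (simp add: bilinear_def o_def)
  ultimately show ?thesis by (simp add: bilinear_def)
qed

lemma bilinear_plus:
  assumes "bilinear h" "bilinear k"
  shows "bilinear (\<lambda>x y. h x y + k x y)"
  using assms by (simp add: bilinear_def linear_compose_add)


theorem mainTheorem3:
  fixes W Wh :: "'q \<Rightarrow> (real^'n) set"
    and H K L :: "'q \<Rightarrow> real^'n \<Rightarrow> real"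
    and dh dhh :: "'q \<Rightarrow> real^'n"
  assumes W: "subbundle W"
    and H: "quadratic_form_on (\<lambda>q. UNIV) H"
    and Wh: "is_complement Wh W"
    and K: "quadratic_form_on Wh K"
    and L: "quadratic_form_on W L"
  shows "(\<forall>q. \<forall>\<sigma>\<in>Wh q. fiber_deriv (\<lambda>q \<alpha>. L q (proj_along W Wh q \<alpha>)) q \<sigma> = 0) \<and>
    ((\<forall>q. \<forall>v\<in>annihilator (W q).
        let Hh = (\<lambda>q \<alpha>. K q (proj_along Wh W q \<alpha>) + L q (proj_along W Wh q \<alpha>));
            \<alpha> = inv (fiber_deriv Hh q) v
        in pairing (dhh q) (fiber_deriv H q \<alpha>) - pairing (dh q) (fiber_deriv Hh q \<alpha>) = 0)
     \<longleftrightarrow>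
     (\<forall>q. \<forall>\<sigma>\<in>Wh q.
        pairing (dhh q) (fiber_deriv H q \<sigma>)
        - pairing (dh q) (fiber_deriv (\<lambda>q \<alpha>. K q (proj_along Wh W q \<alpha>)) q \<sigma>) = 0))"
proof -
  have Wsub: "\<And>q. subspace (W q)" using W by (simp add: subbundle_def)
  have Whsub: "\<And>q. subspace (Wh q)" using Wh by (simp add: is_complement_def subbundle_def)
  have Wint: "\<And>q. Wh q \<inter> W q = {0}" using Wh by (simp add: is_complement_def)
  have Wint': "\<And>q. W q \<inter> Wh q = {0}" using Wint by blast
  have Wspan: "\<And>q \<alpha>. \<exists>\<sigma>\<in>Wh q. \<exists>\<omega>\<in>W q. \<alpha> = \<sigma> + \<omega>" using Wh by (simp add: is_complement_def)
  have Wspan': "\<And>q \<alpha>. \<exists>\<omega>\<in>W q. \<exists>\<sigma>\<in>Wh q. \<alpha> = \<omega> + \<sigma>"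
    using Wspan by (metis add.commute)
  define Ph where "Ph = proj_along Wh W"
  define P where "P = proj_along W Wh"
  have Phm: "\<And>q \<alpha>. Ph q \<alpha> \<in> Wh q \<and> \<alpha> - Ph q \<alpha> \<in> W q"
    unfolding Ph_def by (rule proj_mem[where A=Wh and B=W]) (use Whsub Wsub Wint Wspan in auto)
  have Pm: "\<And>q \<alpha>. P q \<alpha> \<in> W q \<and> \<alpha> - P q \<alpha> \<in> Wh q"
    unfolding P_def by (rule proj_mem[where A=W and B=Wh]) (use Whsub Wsub Wint' Wspan' in auto)
  have linPh: "\<And>q. linear (Ph q)"
    unfolding Ph_def by (rule proj_linear[where A=Wh and B=W]) (use Whsub Wsub Wint Wspan in auto)
  have linP: "\<And>q. linear (P q)"
    unfolding P_def by (rule proj_linear[where A=W and B=Wh]) (use Whsub Wsub Wint' Wspan' in auto)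
  have charPh: "\<And>q \<alpha> \<sigma>. \<sigma> \<in> Wh q \<Longrightarrow> \<alpha> - \<sigma> \<in> W q \<Longrightarrow> Ph q \<alpha> = \<sigma>"
    unfolding Ph_def by (rule proj_char[where A=Wh and B=W]) (use Whsub Wsub Wint in auto)
  have charP: "\<And>q \<alpha> \<sigma>. \<sigma> \<in> W q \<Longrightarrow> \<alpha> - \<sigma> \<in> Wh q \<Longrightarrow> P q \<alpha> = \<sigma>"
    unfolding P_def by (rule proj_char[where A=W and B=Wh]) (use Whsub Wsub Wint' in auto)
  have sumP: "\<And>q \<alpha>. Ph q \<alpha> + P q \<alpha> = \<alpha>"
  proof -
    fix q \<alpha>
    have "P q \<alpha> = \<alpha> - Ph q \<alpha>" by (rule charP) (use Phm in auto)
    thus "Ph q \<alpha> + P q \<alpha> = \<alpha>" by simp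
  qed
  have Ph_Wh: "\<And>q \<sigma>. \<sigma> \<in> Wh q \<Longrightarrow> Ph q \<sigma> = \<sigma>"
    by (rule charPh) (auto simp: subspace_0[OF Wsub])
  have P_Wh: "\<And>q \<sigma>. \<sigma> \<in> Wh q \<Longrightarrow> P q \<sigma> = 0"
    by (rule charP) (auto simp: subspace_0[OF Wsub])
  have Ph_W: "\<And>q \<omega>. \<omega> \<in> W q \<Longrightarrow> Ph q \<omega> = 0"
    by (rule charPh) (auto simp: subspace_0[OF Whsub])
  have P_W: "\<And>q \<omega>. \<omega> \<in> W q \<Longrightarrow> P q \<omega> = \<omega>"
    by (rule charP) (auto simp: subspace_0[OF Whsub])
  obtain BH where BH: "\<And>q. bilinear (BH q) \<and> (\<forall>\<alpha>\<in>UNIV. \<forall>\<beta>\<in>UNIV. BH q \<alpha> \<beta> = BH q \<beta> \<alpha>) \<and>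
         (\<forall>\<alpha>\<in>UNIV. \<alpha> \<noteq> 0 \<longrightarrow> BH q \<alpha> \<alpha> > 0) \<and> (\<forall>\<alpha>\<in>UNIV. H q \<alpha> = BH q \<alpha> \<alpha> / 2)"
    using H unfolding quadratic_form_on_def by blast
  obtain BK where BK: "\<And>q. bilinear (BK q) \<and> (\<forall>\<alpha>\<in>Wh q. \<forall>\<beta>\<in>Wh q. BK q \<alpha> \<beta> = BK q \<beta> \<alpha>) \<and>
         (\<forall>\<alpha>\<in>Wh q. \<alpha> \<noteq> 0 \<longrightarrow> BK q \<alpha> \<alpha> > 0) \<and> (\<forall>\<alpha>\<in>Wh q. K q \<alpha> = BK q \<alpha> \<alpha> / 2)"
    using K unfolding quadratic_form_on_def by blast
  obtain BL where BL: "\<And>q. bilinear (BL q) \<and> (\<forall>\<alpha>\<in>W q. \<forall>\<beta>\<in>W q. BL q \<alpha> \<beta> = BL q \<beta> \<alpha>) \<and>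
         (\<forall>\<alpha>\<in>W q. \<alpha> \<noteq> 0 \<longrightarrow> BL q \<alpha> \<alpha> > 0) \<and> (\<forall>\<alpha>\<in>W q. L q \<alpha> = BL q \<alpha> \<alpha> / 2)"
    using L unfolding quadratic_form_on_def by blast
  define CK where "CK q x y = BK q (Ph q x) (Ph q y)" for q x y
  define CL where "CL q x y = BL q (P q x) (P q y)" for q x y
  have bCK: "\<And>q. bilinear (CK q)"
    unfolding CK_def by (rule bilinear_compose) (use BK linPh in auto)
  have bCL: "\<And>q. bilinear (CL q)"
    unfolding CL_def by (rule bilinear_compose) (use BL linP in auto)
  have sCK: "\<And>q x y. CK q x y = CK q y x" unfolding CK_def using BK Phm by blast
  have sCL: "\<And>q x y. CL q x y = CL q y x" unfolding CL_def using BL Pm by blast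
  have FK: "\<And>q \<alpha>. fiber_deriv (\<lambda>q \<alpha>. K q (Ph q \<alpha>)) q \<alpha> = rep (CK q \<alpha>)"
    by (rule fd_quad[OF bCK]) (use sCK BK Phm CK_def in auto)
  have FL: "\<And>q \<alpha>. fiber_deriv (\<lambda>q \<alpha>. L q (P q \<alpha>)) q \<alpha> = rep (CL q \<alpha>)"
    by (rule fd_quad[OF bCL]) (use sCL BL Pm CL_def in auto)
  have FHh: "\<And>q \<alpha>. fiber_deriv (\<lambda>q \<alpha>. K q (Ph q \<alpha>) + L q (P q \<alpha>)) q \<alpha>
      = rep (\<lambda>y. CK q \<alpha> y + CL q \<alpha> y)"
    by (rule fd_quad[OF bilinear_plus[OF bCK bCL]]) (use sCK sCL BK BL Phm Pm CK_def CL_def in auto)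
  have CL_Wh: "\<And>q \<sigma> y. \<sigma> \<in> Wh q \<Longrightarrow> CL q \<sigma> y = 0"
    unfolding CL_def using P_Wh BL bilinear_lzero by metis
  have CK_W: "\<And>q \<sigma> y. y \<in> W q \<Longrightarrow> CK q \<sigma> y = 0"
    unfolding CK_def using Ph_W BK bilinear_rzero by metis
  have rep0: "rep (\<lambda>_. 0) = (0::real^'n)" by (simp add: rep_def)
  have part1: "\<forall>q. \<forall>\<sigma>\<in>Wh q. fiber_deriv (\<lambda>q \<alpha>. L q (P q \<alpha>)) q \<sigma> = 0"
  proof (intro allI ballI)
    fix q \<sigma> assume "\<sigma> \<in> Wh q"
    hence "CL q \<sigma> = (\<lambda>_. 0)" using CL_Wh by auto
    thus "fiber_deriv (\<lambda>q \<alpha>. L q (P q \<alpha>)) q \<sigma> = 0" using FL rep0 by simp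
  qed
  define G where "G q = fiber_deriv (\<lambda>q \<alpha>. K q (Ph q \<alpha>) + L q (P q \<alpha>)) q" for q
  have Ginner: "\<And>q \<alpha> \<beta>. \<beta> \<bullet> G q \<alpha> = CK q \<alpha> \<beta> + CL q \<alpha> \<beta>"
  proof -
    fix q \<alpha> \<beta>
    have "linear (\<lambda>y. CK q \<alpha> y + CL q \<alpha> y)"
      using bilinear_plus[OF bCK bCL] by (simp add: bilinear_def)
    thus "\<beta> \<bullet> G q \<alpha> = CK q \<alpha> \<beta> + CL q \<alpha> \<beta>" unfolding G_def FHh by (simp add: rep_inner)
  qed
  have linG: "\<And>q. linear (G q)"
  proof (rule linearI)
    fix q x y
    show "G q (x + y) = G q x + G q y"
      by (rule vec_eq_inner) (simp add: Ginner inner_add_right bilinear_ladd[OF bCK] bilinear_ladd[OF bCL])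
  next
    fix q r x
    show "G q (r *\<^sub>R x) = r *\<^sub>R G q x"
      by (rule vec_eq_inner) (simp add: Ginner bilinear_lmul[OF bCK] bilinear_lmul[OF bCL] algebra_simps)
  qed
  have BKnn: "\<And>q x. x \<in> Wh q \<Longrightarrow> BK q x x \<ge> 0"
    by (metis BK bilinear_lzero less_le order_refl)
  have BLnn: "\<And>q x. x \<in> W q \<Longrightarrow> BL q x x \<ge> 0"
    by (metis BL bilinear_lzero less_le order_refl)
  have injG: "\<And>q. inj (G q)"
  proof -
    fix q
    have "\<forall>x. G q x = 0 \<longrightarrow> x = 0"
    proof (intro allI impI)
      fix x assume "G q x = 0"
      hence "x \<bullet> G q x = 0" by simp
      hence e: "BK q (Ph q x) (Ph q x) + BL q (P q x) (P q x) = 0"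
        by (simp add: Ginner CK_def CL_def)
      have "BK q (Ph q x) (Ph q x) \<ge> 0" "BL q (P q x) (P q x) \<ge> 0" using BKnn BLnn Phm Pm by auto
      hence "BK q (Ph q x) (Ph q x) = 0" "BL q (P q x) (P q x) = 0" using e by linarith+
      hence "Ph q x = 0" "P q x = 0" using BK BL Phm Pm by (metis less_irrefl)+
      thus "x = 0" using sumP[of q x] by simp
    qed
    thus "inj (G q)" using linear_injective_0[OF linG] by blast
  qed
  have surjG: "\<And>q. surj (G q)" using linear_injective_imp_surjective linG injG by blast
  have GK: "\<And>q \<sigma>. \<sigma> \<in> Wh q \<Longrightarrow> G q \<sigma> = fiber_deriv (\<lambda>q \<alpha>. K q (Ph q \<alpha>)) q \<sigma>"
  proof -
    fix q \<sigma> assume s: "\<sigma> \<in> Wh q"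
    show "G q \<sigma> = fiber_deriv (\<lambda>q \<alpha>. K q (Ph q \<alpha>)) q \<sigma>"
      by (rule vec_eq_inner) (simp add: Ginner FK rep_inner bilinear_def bCK[unfolded bilinear_def] CL_Wh[OF s])
  qed
  have ann_Wh: "\<And>q v. v \<in> annihilator (W q) \<Longrightarrow> inv (G q) v \<in> Wh q"
  proof -
    fix q v assume v: "v \<in> annihilator (W q)"
    define \<alpha> where "\<alpha> = inv (G q) v"
    have Ga: "G q \<alpha> = v" unfolding \<alpha>_def using surjG[of q] by (simp add: surj_f_inv_f)
    have "P q \<alpha> \<bullet> v = 0" using v Pm unfolding annihilator_def pairing_def by blast
    hence "CK q \<alpha> (P q \<alpha>) + CL q \<alpha> (P q \<alpha>) = 0" using Ginner Ga by metis
    hence "BL q (P q \<alpha>) (P q \<alpha>) = 0"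
      using CK_W[of "P q \<alpha>" q] Pm P_W unfolding CL_def by auto
    hence "P q \<alpha> = 0" using BL Pm by (metis less_irrefl)
    hence "\<alpha> = Ph q \<alpha>" using sumP[of q \<alpha>] by simp
    thus "inv (G q) v \<in> Wh q" using Phm \<alpha>_def by metis
  qed
  have Wh_ann: "\<And>q \<sigma>. \<sigma> \<in> Wh q \<Longrightarrow> G q \<sigma> \<in> annihilator (W q)"
  proof -
    fix q \<sigma> assume s: "\<sigma> \<in> Wh q"
    show "G q \<sigma> \<in> annihilator (W q)"
      unfolding annihilator_def pairing_def using Ginner CK_W CL_Wh[OF s] by simp
  qed
  have part2: "(\<forall>q. \<forall>v\<in>annihilator (W q).
        pairing (dhh q) (fiber_deriv H q (inv (G q) v)) - pairing (dh q) (G q (inv (G q) v)) = 0)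
     \<longleftrightarrow>
     (\<forall>q. \<forall>\<sigma>\<in>Wh q.
        pairing (dhh q) (fiber_deriv H q \<sigma>)
        - pairing (dh q) (fiber_deriv (\<lambda>q \<alpha>. K q (Ph q \<alpha>)) q \<sigma>) = 0)"
  proof
    assume A: "\<forall>q. \<forall>v\<in>annihilator (W q).
        pairing (dhh q) (fiber_deriv H q (inv (G q) v)) - pairing (dh q) (G q (inv (G q) v)) = 0"
    show "\<forall>q. \<forall>\<sigma>\<in>Wh q.
        pairing (dhh q) (fiber_deriv H q \<sigma>)
        - pairing (dh q) (fiber_deriv (\<lambda>q \<alpha>. K q (Ph q \<alpha>)) q \<sigma>) = 0"
    proof (intro allI ballI)
      fix q \<sigma> assume s: "\<sigma> \<in> Wh q"
      have "inv (G q) (G q \<sigma>) = \<sigma>" using injG[of q] by (simp add: inv_f_f)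
      thus "pairing (dhh q) (fiber_deriv H q \<sigma>)
        - pairing (dh q) (fiber_deriv (\<lambda>q \<alpha>. K q (Ph q \<alpha>)) q \<sigma>) = 0"
        using A Wh_ann[OF s] GK[OF s] by metis
    qed
  next
    assume A: "\<forall>q. \<forall>\<sigma>\<in>Wh q.
        pairing (dhh q) (fiber_deriv H q \<sigma>)
        - pairing (dh q) (fiber_deriv (\<lambda>q \<alpha>. K q (Ph q \<alpha>)) q \<sigma>) = 0"
    show "\<forall>q. \<forall>v\<in>annihilator (W q).
        pairing (dhh q) (fiber_deriv H q (inv (G q) v)) - pairing (dh q) (G q (inv (G q) v)) = 0"
    proof (intro allI ballI)
      fix q v assume v: "v \<in> annihilator (W q)"
      show "pairing (dhh q) (fiber_deriv H q (inv (G q) v)) - pairing (dh q) (G q (inv (G q) v)) = 0"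
        using A ann_Wh[OF v] GK[OF ann_Wh[OF v]] by metis
    qed
  qed
  show ?thesis
    using part1 part2 unfolding Let_def G_def Ph_def P_def by simp
qed

end
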